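(* For $\beta>1$, the sharp $\mathscr{S}^*_{\wp,n}$-radius of $\mathcal{M}_n(\beta)$ is $(2e(\beta-1)+1)^{-1/n}$.
   Context: $\mathbb{D}$ is the unit disk. For $n\ge1$, $\mathcal{A}_n$ is the class of analytic $f$ on $\mathbb{D}$ of the form $f(z)=z+\sum_{k\ge n+1}b_kz^k$, $\mathcal{A}=\mathcal{A}_1$. $f\prec g$ means $f=g\circ\omega$ for analytic $\omega:\mathbb{D}\to\mathbb{D}$, $\omega(0)=0$. $\wp(z)=1+ze^z$, $\mathscr{S}^*_\wp=\{f\in\mathcal{A}:zf'/f\prec\wp\}$, $\mathscr{S}^*_{\wp,n}=\mathcal{A}_n\cap\mathscr{S}^*_\wp$. $\mathcal{M}_n(\beta)=\{f\in\mathcal{A}_n:\operatorname{Re}(zf'(z)/f(z))<\beta\}$. For classes $G_1,G_2$, $R_{G_1}(G_2)$ is the largest $r_0\in(0,1]$ such that $r^{-1}f(rz)\in G_1$ for all $0<r\le r_0$ and all $f\in G_2$; "sharp" means it cannot be increased. *)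

theory Defs
  imports "HOL-Analysis.Analysis"
begin

abbreviation unit_disk :: "complex set" where
  "unit_disk \<equiv> ball 0 1"

text \<open>The class A_n: analytic f on the unit disk with f(z) = z + sum_{k>=n+1} b_k z^k,
  i.e. f(0)=0, f'(0)=1 and the Taylor coefficients of order 2..n vanish.\<close>
definition class_A :: "nat \<Rightarrow> (complex \<Rightarrow> complex) set" where
  "class_A n = {f. f holomorphic_on unit_disk \<and> f 0 = 0 \<and> deriv f 0 = 1 \<and>
      (\<forall>k. 2 \<le> k \<and> k \<le> n \<longrightarrow> (deriv ^^ k) f 0 = 0)}"

definition subordinate :: "(complex \<Rightarrow> complex) \<Rightarrow> (complex \<Rightarrow> complex) \<Rightarrow> bool" where
  "subordinate f g \<longleftrightarrow> (\<exists>\<omega>. \<omega> holomorphic_on unit_disk \<and> \<omega> ` unit_disk \<subseteq> unit_disk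
      \<and> \<omega> 0 = 0 \<and> (\<forall>z\<in>unit_disk. f z = g (\<omega> z)))"

text \<open>The function z f'(z)/f(z), with its removable value 1 at z = 0 (for f in A).\<close>
definition zdlog :: "(complex \<Rightarrow> complex) \<Rightarrow> complex \<Rightarrow> complex" where
  "zdlog f z = (if z = 0 then 1 else z * deriv f z / f z)"

definition wp :: "complex \<Rightarrow> complex" where
  "wp z = 1 + z * exp z"

text \<open>S*_{wp,n}. (Well-definedness of z f'/f requires f z \<noteq> 0 for z \<noteq> 0.)\<close>
definition S_wp :: "nat \<Rightarrow> (complex \<Rightarrow> complex) set" where
  "S_wp n = {f \<in> class_A n. (\<forall>z\<in>unit_disk - {0}. f z \<noteq> 0) \<and> subordinate (zdlog f) wp}"

definition class_M :: "nat \<Rightarrow> real \<Rightarrow> (complex \<Rightarrow> complex) set" where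
  "class_M n \<beta> = {f \<in> class_A n. (\<forall>z\<in>unit_disk - {0}. f z \<noteq> 0) \<and>
      (\<forall>z\<in>unit_disk. Re (zdlog f z) < \<beta>)}"

definition admissible_radii ::
  "(complex \<Rightarrow> complex) set \<Rightarrow> (complex \<Rightarrow> complex) set \<Rightarrow> real set" where
  "admissible_radii G1 G2 = {r0. 0 < r0 \<and> r0 \<le> 1 \<and>
      (\<forall>r. 0 < r \<and> r \<le> r0 \<longrightarrow> (\<forall>f\<in>G2. (\<lambda>z. f (of_real r * z) / of_real r) \<in> G1))}"

definition is_sharp_radius ::
  "(complex \<Rightarrow> complex) set \<Rightarrow> (complex \<Rightarrow> complex) set \<Rightarrow> real \<Rightarrow> bool" where
  "is_sharp_radius G1 G2 R \<longleftrightarrow> R \<in> admissible_radii G1 G2 \<and> (\<forall>r\<in>admissible_radii G1 G2. r \<le> R)"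

end

theory Submission
  imports Defs "HOL-Complex_Analysis.Complex_Analysis"
begin


lemma exp_lip:
  assumes "u \<in> ball (0::complex) 1" "v \<in> ball 0 1"
  shows "norm (exp (-u) - exp (-v)) \<le> exp 1 * norm (u - v)"
proof (rule field_differentiable_bound[of "ball 0 1" _ "\<lambda>z. - exp (-z)"])
  show "convex (ball (0::complex) 1)" by simp
  fix z :: complex assume z: "z \<in> ball 0 1"
  show "((\<lambda>z. exp (-z)) has_field_derivative - exp (-z)) (at z within ball 0 1)"
    by (auto intro!: derivative_eq_intros)
  have "- Re z \<le> 1" using z complex_Re_le_cmod[of "-z"] by auto
  then show "norm (- exp (-z)) \<le> exp 1" by (simp add: norm_exp)
qed (use assms in auto)

lemma lambert_exists:
  fixes w :: complex
  assumes "norm w < 1 / exp 1"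
  shows "\<exists>u. norm u < 1 \<and> u * exp u = w"
proof -
  define T where "T = (\<lambda>u. w * exp (-u))"
  have we: "norm w * exp 1 < 1" using assms by (simp add: field_simps)
  have nT: "norm (T u) < 1" if "u \<in> cball 0 1" for u
  proof -
    have "- Re u \<le> 1" using that complex_Re_le_cmod[of "-u"] by auto
    then have "norm (exp (-u)) \<le> exp 1" by (simp add: norm_exp)
    then have "norm (T u) \<le> norm w * exp 1"
      unfolding T_def norm_mult by (simp add: mult_left_mono)
    with we show ?thesis by simp
  qed
  have lip: "norm (exp (-u) - exp (-v)) \<le> exp 1 * norm (u - v)" if "u \<in> cball 0 1" "v \<in> cball 0 1" for u v :: complex
  proof (rule field_differentiable_bound[of "cball 0 1" _ "\<lambda>z. - exp (-z)"])
    show "convex (cball (0::complex) 1)" by simp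
    fix z :: complex assume z: "z \<in> cball 0 1"
    show "((\<lambda>z. exp (-z)) has_field_derivative - exp (-z)) (at z within cball 0 1)"
      by (auto intro!: derivative_eq_intros)
    have "- Re z \<le> 1" using z complex_Re_le_cmod[of "-z"] by auto
    then show "norm (- exp (-z)) \<le> exp 1" by (simp add: norm_exp)
  qed (use that in auto)
  have "\<exists>!x\<in>cball 0 1. T x = x"
  proof (rule Banach_fix)
    show "complete (cball (0::complex) 1)" by (simp add: complete_eq_closed)
    show "cball (0::complex) 1 \<noteq> {}" by simp
    show "0 \<le> norm w * exp 1" by simp
    show "norm w * exp 1 < 1" by fact
    show "T ` cball 0 1 \<subseteq> cball 0 1" using nT by (auto simp: less_imp_le)
    fix x y :: complex assume "x \<in> cball 0 1" "y \<in> cball 0 1"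
    then have "norm (exp (-x) - exp (-y)) \<le> exp 1 * norm (x - y)" by (rule lip)
    then have "norm w * norm (exp (-x) - exp (-y)) \<le> norm w * (exp 1 * norm (x - y))"
      by (simp add: mult_left_mono)
    then show "dist (T x) (T y) \<le> norm w * exp 1 * dist x y"
      by (simp add: T_def dist_norm norm_mult[symmetric] right_diff_distrib mult_ac)
  qed
  then obtain u where u: "u \<in> cball 0 1" "T u = u" by blast
  have "norm u < 1" using nT[OF u(1)] u(2) by simp
  moreover have "u * exp u = w" using u(2) unfolding T_def
    by (metis exp_minus_inverse mult.assoc mult.commute mult.right_neutral)
  ultimately show ?thesis by blast
qed

lemma lambert_unique:
  fixes u v :: complex
  assumes "norm u < 1" "norm v < 1" "u * exp u = v * exp v" "norm (u * exp u) < 1 / exp 1"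
  shows "u = v"
proof -
  define w where "w = u * exp u"
  have uw: "u = w * exp (-u)" unfolding w_def by (simp add: exp_minus field_simps)
  have vw: "v = w * exp (-v)" using assms(3) unfolding w_def by (simp add: exp_minus field_simps)
  have "norm (u - v) = norm w * norm (exp (-u) - exp (-v))"
    by (subst uw, subst vw) (simp add: norm_mult[symmetric] right_diff_distrib)
  also have "\<dots> \<le> norm w * (exp 1 * norm (u - v))"
    using exp_lip[of u v] assms by (simp add: mult_left_mono)
  finally have "norm (u - v) \<le> (norm w * exp 1) * norm (u - v)" by (simp add: mult_ac)
  moreover have "norm w * exp 1 < 1" using assms(4) unfolding w_def by (simp add: field_simps)
  ultimately have "norm (u - v) \<le> 0"
    by (smt (verit) mult_le_cancel_right1 norm_ge_zero)
  then show ?thesis by simp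
qed

lemma lambert_inverse:
  obtains \<phi> where "\<phi> holomorphic_on ball 0 (1 / exp 1)"
    "\<And>w. w \<in> ball 0 (1 / exp 1) \<Longrightarrow> norm (\<phi> w) < 1 \<and> \<phi> w * exp (\<phi> w) = w"
    "\<phi> 0 = 0"
proof -
  define h where "h = (\<lambda>u::complex. u * exp u)"
  define S where "S = ball 0 1 \<inter> h -` ball 0 (1 / exp 1)"
  have "continuous_on UNIV h" unfolding h_def by (intro continuous_intros)
  then have oS: "open S" unfolding S_def by (intro open_Int open_vimage) auto
  have hS: "h holomorphic_on S" unfolding h_def by (intro holomorphic_intros)
  have inj: "inj_on h S"
    by (rule inj_onI) (auto simp: S_def h_def intro: lambert_unique)
  obtain g where g: "g holomorphic_on (h ` S)" "\<And>z. z \<in> S \<Longrightarrow> g (h z) = z"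
    using holomorphic_has_inverse[OF hS oS inj] by blast
  have img: "h ` S = ball 0 (1 / exp 1)"
  proof
    show "h ` S \<subseteq> ball 0 (1 / exp 1)" unfolding S_def by auto
    show "ball 0 (1 / exp 1) \<subseteq> h ` S"
    proof
      fix w :: complex assume "w \<in> ball 0 (1 / exp 1)"
      then obtain u where "norm u < 1" "u * exp u = w" using lambert_exists by auto
      with \<open>w \<in> _\<close> show "w \<in> h ` S" unfolding S_def h_def by (auto intro!: image_eqI[of _ _ u])
    qed
  qed
  show ?thesis
  proof
    show "g holomorphic_on ball 0 (1 / exp 1)" using g(1) img by simp
    fix w :: complex assume "w \<in> ball 0 (1 / exp 1)"
    then have "w \<in> h ` S" using img by simp
    then obtain u where u: "u \<in> S" "w = h u" by blast
    then show "norm (g w) < 1 \<and> g w * exp (g w) = w" using g(2)[OF u(1)]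
      by (auto simp: S_def h_def)
  next
    have "0 \<in> S" by (simp add: S_def h_def)
    then show "g 0 = 0" using g(2)[of 0] by (simp add: h_def)
  qed
qed



lemma factor_zero:
  fixes f :: "complex \<Rightarrow> complex"
  assumes holf: "f holomorphic_on ball 0 1" and dz: "\<And>i. i < m \<Longrightarrow> (deriv ^^ i) f 0 = 0"
  obtains g where "g holomorphic_on ball 0 1" "\<And>w. w \<in> ball 0 1 \<Longrightarrow> f w = w ^ m * g w"
proof -
  define g where "g w = suminf (\<lambda>i. (deriv ^^ (i + m)) f 0 / (fact (i + m)) * w ^ i)" for w
  have sumsg: "(\<lambda>i. (deriv ^^ (i + m)) f 0 / (fact (i + m)) * w ^ i) sums g w"
   and feq: "f w = w ^ m * g w"
       if w: "w \<in> ball 0 1" for w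
  proof -
    define powf where "powf = (\<lambda>i. (deriv ^^ i) f 0 / (fact i) * (w - 0) ^ i)"
    have "powf sums f w"
      unfolding powf_def by (rule holomorphic_power_series [OF holf w])
    moreover have "(\<Sum>i<m. powf i) = 0"
      by (simp add: powf_def dz)
    ultimately have fsums: "(\<lambda>i. powf (i + m)) sums f w"
      using sums_iff_shift'[of powf m "f w"] by simp
    then have *: "summable (\<lambda>i. w ^ m * ((deriv ^^ (i + m)) f 0 / fact (i + m) * w ^ i))"
      unfolding powf_def using sums_summable
      by (auto simp: power_add mult_ac)
    have "summable (\<lambda>i. (deriv ^^ (i + m)) f 0 / fact (i + m) * w ^ i)"
    proof (cases "w = 0")
      case False then show ?thesis
        using summable_mult [OF *, of "1 / w ^ m"] by simp
    next
      case True then show ?thesis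
        by (auto intro!: summable_finite [of "{0}"] split: if_split_asm)
    qed
    then show sumsg: "(\<lambda>i. (deriv ^^ (i + m)) f 0 / (fact (i + m)) * w ^ i) sums g w"
      by (simp add: summable_sums_iff g_def)
    show "f w = w ^ m * g w"
      using sums_mult [OF sumsg, of "w ^ m"]
      by (intro sums_unique2 [OF fsums]) (auto simp: power_add mult_ac powf_def)
  qed
  have "g holomorphic_on ball 0 1"
    using power_series_holomorphic[of 0 1 "\<lambda>i. (deriv ^^ (i + m)) f 0 / (fact (i + m))" g] sumsg
    by simp
  then show ?thesis using that feq by blast
qed

lemma factor_zero_converse:
  fixes f G :: "complex \<Rightarrow> complex"
  assumes holf: "f holomorphic_on ball 0 1" and holG: "G holomorphic_on ball 0 1"
    and eq: "\<And>w. w \<in> ball 0 1 \<Longrightarrow> f w = w ^ m * G w" and k: "k < m"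
  shows "(deriv ^^ k) f 0 = 0"
proof -
  have "(deriv ^^ k) f 0 = (deriv ^^ k) (\<lambda>w. w ^ m * G w) 0"
    by (rule higher_deriv_transform_within_open[OF holf _ _ _ eq])
       (auto intro!: holomorphic_intros holG)
  also have "\<dots> = (\<Sum>i = 0..k. of_nat (k choose i) * (deriv ^^ i) (\<lambda>w. w ^ m) 0 * (deriv ^^ (k - i)) G 0)"
    by (rule higher_deriv_mult[OF _ holG]) (auto intro!: holomorphic_intros)
  also have "\<dots> = 0"
  proof (rule sum.neutral, intro ballI)
    fix i assume "i \<in> {0..k}"
    then have "i < m" using k by auto
    have "(deriv ^^ i) (\<lambda>w. w ^ m) (0::complex) = pochhammer (of_nat (Suc m - i)) i * (0 - 0) ^ (m - i)"
      using higher_deriv_power[of i 0 m 0] by simp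
    also have "\<dots> = 0" using \<open>i < m\<close> by simp
    finally show "of_nat (k choose i) * (deriv ^^ i) (\<lambda>w. w ^ m) 0 * (deriv ^^ (k - i)) G 0 = 0"
      by simp
  qed
  finally show ?thesis .
qed

lemma classA_repr:
  fixes f :: "complex \<Rightarrow> complex"
  assumes fA: "f \<in> class_A n" and n: "n \<ge> 1" and nz: "\<forall>z\<in>ball 0 1 - {0}. f z \<noteq> 0"
  obtains K where "K holomorphic_on ball 0 1" "\<And>z. z \<in> ball 0 1 \<Longrightarrow> zdlog f z = 1 + z ^ n * K z"
proof -
  have holf: "f holomorphic_on ball 0 1" and f0: "f 0 = 0" and d1: "deriv f 0 = 1"
    and dk: "\<And>k. 2 \<le> k \<Longrightarrow> k \<le> n \<Longrightarrow> (deriv ^^ k) f 0 = 0"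
    using fA by (auto simp: class_A_def)
  have holg: "(\<lambda>z. f z - z) holomorphic_on ball 0 1" by (intro holomorphic_intros holf)
  have "(deriv ^^ i) (\<lambda>z. f z - z) 0 = 0" if "i < n + 1" for i
  proof -
    have "(deriv ^^ i) (\<lambda>z. f z - z) 0 = (deriv ^^ i) f 0 - (deriv ^^ i) (\<lambda>z. z) 0"
      by (rule higher_deriv_diff) (auto intro!: holomorphic_intros holf)
    also have "\<dots> = 0"
      using that f0 d1 dk[of i] by (cases "i = 0"; cases "i = 1") auto
    finally show ?thesis .
  qed
  then obtain H where holH: "H holomorphic_on ball 0 1"
    and Heq: "\<And>w. w \<in> ball 0 1 \<Longrightarrow> f w - w = w ^ (n + 1) * H w"
    using factor_zero[OF holg, of "n + 1"] by blast
  define F where "F z = 1 + z ^ n * H z" for z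
  have holdH: "deriv H holomorphic_on ball 0 1" using holH by (simp add: holomorphic_deriv)
  have Fnz: "F z \<noteq> 0" if "z \<in> ball 0 1" for z
  proof (cases "z = 0")
    case True then show ?thesis using n by (simp add: F_def power_0_left)
  next
    case False
    have "f z = z * F z" using Heq[OF that] by (simp add: F_def algebra_simps)
    with nz that False show ?thesis by auto
  qed
  define K where "K z = (of_nat n * H z + z * deriv H z) / F z" for z
  have holK: "K holomorphic_on ball 0 1"
    unfolding K_def F_def using Fnz
    by (intro holomorphic_intros holH holdH) (auto simp: F_def)
  show ?thesis
  proof (rule that[OF holK])
    fix z :: complex assume z: "z \<in> ball 0 1"
    show "zdlog f z = 1 + z ^ n * K z"
    proof (cases "z = 0")
      case True then show ?thesis using n by (simp add: zdlog_def power_0_left)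
    next
      case False
      have Hd: "(H has_field_derivative deriv H z) (at z)"
        using holH z by (auto intro!: holomorphic_derivI)
      have zz: "z * z ^ (n - Suc 0) = z ^ n" using n by (cases n) auto
      have "((\<lambda>w. w + w ^ (n + 1) * H w) has_field_derivative
              1 + (of_nat (n + 1) * z ^ n * H z + z ^ (n + 1) * deriv H z)) (at z)"
        using n zz by (auto intro!: derivative_eq_intros Hd simp: algebra_simps)
      then have "(f has_field_derivative
              1 + (of_nat (n + 1) * z ^ n * H z + z ^ (n + 1) * deriv H z)) (at z)"
        by (rule has_field_derivative_transform_within_open[where S="ball 0 1"])
           (use z Heq in \<open>auto simp: algebra_simps\<close>)
      then have df: "deriv f z = 1 + (of_nat (n + 1) * z ^ n * H z + z ^ (n + 1) * deriv H z)"
        by (rule DERIV_imp_deriv)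
      have fz: "f z = z * F z" using Heq[OF z] by (simp add: F_def algebra_simps)
      have "zdlog f z = (1 + (of_nat (n + 1) * z ^ n * H z + z ^ (n + 1) * deriv H z)) / F z"
        using False Fnz[OF z] by (simp add: zdlog_def df fz)
      also have "\<dots> = 1 + z ^ n * K z"
        using Fnz[OF z] by (simp add: K_def F_def field_simps)
      finally show ?thesis .
    qed
  qed
qed

lemma zdlog_holo:
  fixes f :: "complex \<Rightarrow> complex"
  assumes fA: "f \<in> class_A n" and n: "n \<ge> 1" and nz: "\<forall>z\<in>ball 0 1 - {0}. f z \<noteq> 0"
  shows "zdlog f holomorphic_on ball 0 1"
proof -
  obtain K where K: "K holomorphic_on ball 0 1" "\<And>z. z \<in> ball 0 1 \<Longrightarrow> zdlog f z = 1 + z ^ n * K z"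
    using classA_repr[OF assms] by blast
  have "(\<lambda>z. 1 + z ^ n * K z) holomorphic_on ball 0 1" by (intro holomorphic_intros K(1))
  then show ?thesis by (rule holomorphic_transform) (use K(2) in auto)
qed

lemma scale_lemma:
  fixes f :: "complex \<Rightarrow> complex" and r :: real
  assumes fA: "f \<in> class_A n" and nz: "\<forall>z\<in>ball 0 1 - {0}. f z \<noteq> 0" and r: "0 < r" "r \<le> 1"
  defines "g \<equiv> (\<lambda>z. f (of_real r * z) / of_real r)"
  shows "g \<in> class_A n" "\<forall>z\<in>ball 0 1 - {0}. g z \<noteq> 0"
    "\<And>z. z \<in> ball 0 1 \<Longrightarrow> zdlog g z = zdlog f (of_real r * z)"
proof -
  have holf: "f holomorphic_on ball 0 1" and f0: "f 0 = 0" and d1: "deriv f 0 = 1"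
    and dk: "\<And>k. 2 \<le> k \<Longrightarrow> k \<le> n \<Longrightarrow> (deriv ^^ k) f 0 = 0"
    using fA by (auto simp: class_A_def)
  have inb: "of_real r * z \<in> ball 0 1" if "z \<in> ball 0 1" for z :: complex
  proof -
    have "norm (of_real r * z) = r * norm z" using r by (simp add: norm_mult)
    also have "\<dots> \<le> norm z" using r by (simp add: mult_left_le_one_le)
    also have "\<dots> < 1" using that by simp
    finally show ?thesis by simp
  qed
  have holc: "(\<lambda>z. f (of_real r * z)) holomorphic_on ball 0 1"
  proof -
    have "(f \<circ> (\<lambda>z. of_real r * z)) holomorphic_on ball 0 1"
    proof (rule holomorphic_on_compose_gen[OF _ holf])
      show "(\<lambda>z::complex. of_real r * z) holomorphic_on ball 0 1" by (intro holomorphic_intros)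
      show "(\<lambda>z::complex. of_real r * z) ` ball 0 1 \<subseteq> ball 0 1" using inb by blast
    qed
    then show ?thesis by (simp add: o_def)
  qed
  have inb': "\<And>z::complex. norm z < 1 \<Longrightarrow> norm (of_real r * z) < 1" using inb by simp
  have geq: "g = (\<lambda>z. (1 / of_real r) * f (of_real r * z))"
    unfolding g_def by (auto simp: field_simps)
  have dg: "(deriv ^^ k) g 0 = of_real r ^ k / of_real r * (deriv ^^ k) f 0" for k
  proof -
    have "(deriv ^^ k) g 0 = (1 / of_real r) * (deriv ^^ k) (\<lambda>z. f (of_real r * z)) 0"
      unfolding geq by (rule higher_deriv_cmult[OF holc]) auto
    also have "(deriv ^^ k) (\<lambda>z. f (of_real r * z)) 0 = of_real r ^ k * (deriv ^^ k) f (of_real r * 0)"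
      by (rule higher_deriv_compose_linear[OF holf, of "ball 0 1"]) (use inb' in auto)
    finally show ?thesis by simp
  qed
  show "g \<in> class_A n"
    unfolding class_A_def
  proof (intro CollectI conjI allI impI)
    show "g holomorphic_on ball 0 1" unfolding geq by (intro holomorphic_intros holc)
    show "g 0 = 0" by (simp add: g_def f0)
    show "deriv g 0 = 1" using dg[of 1] d1 r by simp
    fix k assume "2 \<le> k \<and> k \<le> n"
    then show "(deriv ^^ k) g 0 = 0" using dg[of k] dk[of k] by simp
  qed
  show "\<forall>z\<in>ball 0 1 - {0}. g z \<noteq> 0"
    using nz inb r by (auto simp: g_def)
  fix z :: complex assume z: "z \<in> ball 0 1"
  show "zdlog g z = zdlog f (of_real r * z)"
  proof (cases "z = 0")
    case True then show ?thesis by (simp add: zdlog_def)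
  next
    case False
    have fd: "(f has_field_derivative deriv f (of_real r * z)) (at (of_real r * z))"
      using holf inb[OF z] by (auto intro!: holomorphic_derivI)
    have lin: "((\<lambda>w. of_real r * w) has_field_derivative of_real r) (at z)"
      by (auto intro!: derivative_eq_intros)
    have "((\<lambda>w. f (of_real r * w)) has_field_derivative deriv f (of_real r * z) * of_real r) (at z)"
      using DERIV_chain2[where f=f and g="\<lambda>w. of_real r * w", OF fd lin] .
    then have "(g has_field_derivative deriv f (of_real r * z) * of_real r / of_real r) (at z)"
      unfolding g_def by (rule DERIV_cdivide)
    then have "deriv g z = deriv f (of_real r * z) * of_real r / of_real r" by (rule DERIV_imp_deriv)
    then have "deriv g z = deriv f (of_real r * z)" using r by simp
    then show ?thesis using False r by (simp add: zdlog_def g_def field_simps)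
  qed
qed



lemma im_zero_lemma:
  fixes u :: complex
  assumes "norm u < 1" "Im (u * exp u) = 0"
  shows "Im u = 0"
proof -
  define a where "a = Re u"
  define b where "b = Im u"
  have "Im (u * exp u) = exp a * (a * sin b + b * cos b)"
    by (simp add: a_def b_def Re_exp Im_exp algebra_simps)
  then have e1: "a * sin b = - (b * cos b)" using assms(2) by simp
  have n2: "a^2 + b^2 < 1"
  proof -
    have "(norm u)^2 < 1^2" using assms(1) by (intro power_strict_mono) auto
    then show ?thesis by (simp add: a_def b_def cmod_power2)
  qed
  have e2: "a^2 * (sin b)^2 = b^2 * (cos b)^2"
  proof -
    have "(a * sin b)^2 = (b * cos b)^2" using e1 by simp
    then show ?thesis by (simp only: power_mult_distrib)
  qed
  have "(a^2 + b^2) * (sin b)^2 = a^2 * (sin b)^2 + b^2 * (sin b)^2" by (simp only: distrib_right)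
  also have "\<dots> = b^2 * ((sin b)^2 + (cos b)^2)" using e2 by (simp only: distrib_left add.commute)
  also have "\<dots> = b^2" by simp
  finally have eq: "(a^2 + b^2) * (sin b)^2 = b^2" .
  have sb: "(sin b)^2 \<le> b^2"
    using abs_sin_x_le_abs_x[of b] by (metis abs_ge_zero power2_abs power_mono)
  have "b^2 \<le> (a^2 + b^2) * b^2"
  proof -
    have "(a^2 + b^2) * (sin b)^2 \<le> (a^2 + b^2) * b^2" using sb by (intro mult_left_mono) auto
    then show ?thesis using eq by simp
  qed
  then have h: "b^2 * (1 - (a^2 + b^2)) \<le> 0" by (simp add: algebra_simps)
  have pos: "1 - (a^2 + b^2) > 0" using n2 by simp
  have "b^2 \<le> 0"
  proof (rule ccontr)
    assume "\<not> b^2 \<le> 0"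
    then have "b^2 > 0" by simp
    then have "b^2 * (1 - (a^2 + b^2)) > 0" using pos by (rule mult_pos_pos)
    then show False using h by simp
  qed
  then show ?thesis unfolding b_def by simp
qed
lemma aexp_lower:
  fixes a :: real
  shows "a * exp a \<ge> - (1 / exp 1)"
proof -
  have "1 + (- a - 1) \<le> exp (- a - 1)" by (rule exp_ge_add_one_self)
  then have "- a \<le> exp (-a) / exp 1" by (simp add: exp_diff)
  then have "- a * exp a \<le> exp (-a) / exp 1 * exp a" by (rule mult_right_mono) simp
  also have "exp (-a) / exp 1 * exp a = (exp (-a) * exp a) / exp 1" by simp
  also have "exp (-a) * exp a = 1" by (simp add: exp_add[symmetric])
  finally show ?thesis by simp
qed

lemma M_bound:
  fixes f :: "complex \<Rightarrow> complex"
  assumes fM: "f \<in> class_M n \<beta>" and n: "n \<ge> 1" and b: "\<beta> > 1"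
    and z: "z \<in> ball 0 1" and zr: "norm z ^ n < 1 / (2 * exp 1 * (\<beta> - 1) + 1)"
  shows "norm (zdlog f z - 1) < 1 / exp 1"
proof -
  define \<rho> where "\<rho> = 1 / (2 * exp 1 * (\<beta> - 1) + 1)"
  have Bpos: "2 * exp 1 * (\<beta> - 1) + 1 > 1" using b by simp
  have rho: "0 < \<rho>" "\<rho> < 1" using Bpos by (auto simp: \<rho>_def)
  have fA: "f \<in> class_A n" and nz: "\<forall>z\<in>ball 0 1 - {0}. f z \<noteq> 0"
    and Rep: "\<And>w. w \<in> ball 0 1 \<Longrightarrow> Re (zdlog f w) < \<beta>"
    using fM by (auto simp: class_M_def)
  obtain K where holK: "K holomorphic_on ball 0 1"
    and Keq: "\<And>w. w \<in> ball 0 1 \<Longrightarrow> zdlog f w = 1 + w ^ n * K w"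
    using classA_repr[OF fA n nz] by blast
  define p where "p = zdlog f"
  define c where "c = complex_of_real (2 * \<beta> - 1)"
  have holp: "p holomorphic_on ball 0 1" unfolding p_def by (rule zdlog_holo[OF fA n nz])
  have key: "norm (p w - 1) < norm (p w - c)" if w: "w \<in> ball 0 1" for w
  proof -
    have "Re (p w) < \<beta>" using Rep[OF w] by (simp add: p_def)
    define a where "a = Re (p w)"
    have h1: "(norm (p w - 1))^2 = (a - 1)^2 + (Im (p w))^2" by (simp add: cmod_power2 a_def)
    have h2: "(norm (p w - c))^2 = (a - (2*\<beta>-1))^2 + (Im (p w))^2" by (simp add: cmod_power2 c_def a_def)
    have h3: "(a - (2*\<beta>-1))^2 - (a-1)^2 = 4*(\<beta>-1)*(\<beta>-a)" by (simp add: power2_eq_square algebra_simps)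
    have h4: "4*(\<beta>-1)*(\<beta>-a) > 0" using b \<open>Re (p w) < \<beta>\<close> by (simp add: a_def)
    have "(norm (p w - 1))^2 < (norm (p w - c))^2" using h1 h2 h3 h4 by linarith
    then show ?thesis by (rule power2_less_imp_less) simp
  qed
  have pne: "p w - c \<noteq> 0" if "w \<in> ball 0 1" for w
    using key[OF that] by auto
  define \<Phi> where "\<Phi> w = K w / (p w - c)" for w
  have holPhi: "\<Phi> holomorphic_on ball 0 1"
    unfolding \<Phi>_def using pne by (intro holomorphic_intros holK holp) auto
  have bnd: "norm (w ^ n * \<Phi> w) < 1" if w: "w \<in> ball 0 1" for w
  proof -
    have "w ^ n * \<Phi> w = (p w - 1) / (p w - c)"
      using Keq[OF w] by (simp add: \<Phi>_def p_def)
    then show ?thesis using key[OF w] pne[OF w] by (simp add: norm_divide divide_less_eq)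
  qed
  show ?thesis
  proof (cases "z = 0")
    case True then show ?thesis by (simp add: zdlog_def)
  next
    case False
    have nzpos: "norm z ^ n > 0" using False by simp
    define t where "t = norm z ^ n / \<rho>"
    have zr': "norm z ^ n < \<rho>" using zr by (simp add: \<rho>_def)
    have t1: "t < 1" using zr' rho by (simp add: t_def)
    have tz: "norm z ^ n < t"
    proof -
      have "norm z ^ n * \<rho> < norm z ^ n" using nzpos rho by simp
      then show ?thesis using rho by (simp add: t_def field_simps)
    qed
    define s where "s = root n ((1 + t) / 2)"
    have tpos: "t > 0" using nzpos rho by (simp add: t_def)
    have sn: "s ^ n = (1 + t) / 2" unfolding s_def using n tpos by simp
    have spos: "s > 0" unfolding s_def using n tpos by simp
    have s1: "s < 1"
    proof -
      have "root n ((1 + t) / 2) < root n 1" using n t1 by (subst real_root_less_iff) auto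
      then show ?thesis using n by (simp add: s_def)
    qed
    have tsn: "t < s ^ n"
    proof -
      have "t < (1 + t) / 2" using t1 by (simp add: field_simps)
      then show ?thesis by (simp only: sn)
    qed
    have zs: "norm z < s"
    proof (rule power_less_imp_less_base[of _ n])
      show "norm z ^ n < s ^ n" using tz tsn by (rule less_trans)
      show "0 \<le> s" using spos by simp
    qed
    have sub: "cball 0 s \<subseteq> ball (0::complex) 1" using s1 by auto
    have "norm (\<Phi> z) \<le> 1 / s ^ n"
    proof (rule maximum_modulus_frontier[of \<Phi> "cball 0 s"])
      show "\<Phi> holomorphic_on interior (cball 0 s)"
        by (rule holomorphic_on_subset[OF holPhi]) (use s1 in auto)
      show "continuous_on (closure (cball 0 s)) \<Phi>"
        using holomorphic_on_imp_continuous_on[OF holomorphic_on_subset[OF holPhi sub]] by simp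
      show "bounded (cball (0::complex) s)" by simp
      show "z \<in> cball 0 s" using zs by simp
      fix w :: complex assume "w \<in> frontier (cball 0 s)"
      then have ws: "norm w = s" using spos by (simp add: frontier_cball)
      then have "w \<in> ball 0 1" using s1 by simp
      from bnd[OF this] have "s ^ n * norm (\<Phi> w) < 1" by (simp add: norm_mult norm_power ws)
      then show "norm (\<Phi> w) \<le> 1 / s ^ n" using spos by (simp add: field_simps)
    qed
    then have "norm z ^ n * norm (\<Phi> z) \<le> norm z ^ n * (1 / s ^ n)"
      by (rule mult_left_mono) simp
    also have "\<dots> < norm z ^ n * (1 / t)"
    proof -
      have "1 / s ^ n < 1 / t" using tpos tsn by (intro divide_strict_left_mono) auto
      then show ?thesis using nzpos by (intro mult_strict_left_mono) auto
    qed
    also have "\<dots> = \<rho>" using nzpos rho False by (simp add: t_def)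
    finally have psib: "norm (z ^ n * \<Phi> z) < \<rho>" by (simp add: norm_mult norm_power)
    define \<psi> where "\<psi> = z ^ n * \<Phi> z"
    have pz: "p z - 1 = z ^ n * K z" using Keq[OF z] by (simp add: p_def)
    have psieq: "\<psi> * (p z - c) = p z - 1"
    proof -
      have "\<psi> * (p z - c) = z ^ n * (K z / (p z - c)) * (p z - c)"
        by (simp only: \<psi>_def \<Phi>_def)
      also have "\<dots> = z ^ n * K z" using pne[OF z] by simp
      finally show ?thesis using pz by simp
    qed
    have "(p z - 1) * (1 - \<psi>) = (p z - 1) - \<psi> * (p z - c) + \<psi> * (1 - c)"
      by (simp add: algebra_simps)
    also have "\<dots> = \<psi> * (1 - c)" using psieq by simp
    finally have "(p z - 1) * (1 - \<psi>) = \<psi> * (1 - c)" .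
    then have eqn: "norm (p z - 1) * norm (1 - \<psi>) = norm \<psi> * (2 * (\<beta> - 1))"
    proof -
      assume h: "(p z - 1) * (1 - \<psi>) = \<psi> * (1 - c)"
      have "1 - c = complex_of_real (2 - 2 * \<beta>)" by (simp add: c_def)
      then have "norm (1 - c) = 2 * (\<beta> - 1)" using b by (simp only: norm_of_real) simp
      then show ?thesis using arg_cong[OF h, of norm] by (simp add: norm_mult)
    qed
    have tri: "1 - norm \<psi> \<le> norm (1 - \<psi>)"
      using norm_triangle_ineq2[of 1 \<psi>] by simp
    define x where "x = norm \<psi>"
    define E where "E = exp (1::real)"
    have Epos: "E > 0" by (simp add: E_def)
    have xr: "x < \<rho>" "x \<ge> 0" using psib by (auto simp: x_def \<psi>_def)
    show ?thesis
    proof (rule ccontr)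
      assume "\<not> norm (zdlog f z - 1) < 1 / exp 1"
      then have ge: "norm (p z - 1) \<ge> 1 / E" by (simp add: p_def E_def)
      have "(1 / E) * (1 - x) \<le> norm (p z - 1) * (1 - x)"
        using ge xr rho by (intro mult_right_mono) auto
      also have "\<dots> \<le> norm (p z - 1) * norm (1 - \<psi>)"
        using tri by (intro mult_left_mono) (auto simp: x_def)
      also have "\<dots> = x * (2 * (\<beta> - 1))" using eqn by (simp add: x_def)
      finally have fin: "(1 / E) * (1 - x) \<le> x * (2 * (\<beta> - 1))" .
      have "1 - x = E * ((1 / E) * (1 - x))" using Epos by simp
      also have "\<dots> \<le> E * (x * (2 * (\<beta> - 1)))" using fin Epos by (intro mult_left_mono) auto
      finally have "(1 - x) \<le> E * (x * (2 * (\<beta> - 1)))" .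
      moreover have "(2 * E * (\<beta> - 1) + 1) * x = E * (x * (2 * (\<beta> - 1))) + x"
        by (simp add: algebra_simps)
      ultimately have h1: "1 \<le> (2 * E * (\<beta> - 1) + 1) * x" by linarith
      have Bp: "2 * E * (\<beta> - 1) + 1 > 0" using Bpos by (simp add: E_def)
      have "1 / (2 * E * (\<beta> - 1) + 1) \<le> ((2 * E * (\<beta> - 1) + 1) * x) / (2 * E * (\<beta> - 1) + 1)"
        using h1 Bp by (intro divide_right_mono) auto
      also have "\<dots> = x" using Bp by simp
      finally have "1 / (2 * E * (\<beta> - 1) + 1) \<le> x" .
      then show False using xr by (simp add: \<rho>_def E_def)
    qed
  qed
qed



lemma Re_pos_not_nonpos: "Re (w::complex) > 0 \<Longrightarrow> w \<notin> \<real>\<^sub>\<le>\<^sub>0"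
  by (auto elim!: nonpos_Reals_cases)

lemma one_minus_in_disk: "norm (w::complex) < 1 \<Longrightarrow> Re (1 - w) > 0"
  using complex_Re_le_cmod[of w] by simp

lemma re_lemma:
  fixes w :: complex
  assumes w1: "norm w < 1"
  shows "Re (w / (1 - w)) > - 1 / 2"
proof -
  define a where "a = Re w"
  define q where "q = Im w"
  have aq: "a^2 + q^2 < 1"
  proof -
    have "(norm w)^2 < 1^2" using w1 by (intro power_strict_mono) auto
    then show ?thesis by (simp add: a_def q_def cmod_power2)
  qed
  have a1: "a < 1"
  proof (rule ccontr)
    assume "\<not> a < 1"
    then have "1 \<le> a" by simp
    then have "1 \<le> a^2" by (simp add: one_le_power)
    moreover have "0 \<le> q^2" by simp
    ultimately show False using aq by simp
  qed
  have D: "(1 - a)^2 + q^2 > 0"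
  proof -
    have "(1 - a)^2 > 0" using a1 by simp
    then show ?thesis by (simp add: add_pos_nonneg)
  qed
  have re: "Re (w / (1 - w)) = (a * (1 - a) - q * q) / ((1 - a)^2 + q^2)"
    by (simp add: Re_divide a_def q_def)
  have "2 * (a * (1 - a) - q * q) + ((1 - a)^2 + q^2) = 1 - (a^2 + q^2)"
    by (simp add: power2_eq_square algebra_simps)
  then have "2 * (a * (1 - a) - q * q) > - ((1 - a)^2 + q^2)" using aq by simp
  then have "(a * (1 - a) - q * q) / ((1 - a)^2 + q^2) > - 1 / 2" using D by (simp add: field_simps)
  then show ?thesis using re by simp
qed

lemma Re_aux: "Re (1 - complex_of_real r * y) = 1 - r * Re y" by simp

lemma extremal:
  fixes n :: nat and \<beta> :: real
  assumes n: "n \<ge> 1" and b: "\<beta> > 1"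
  defines "cc \<equiv> 2 * (\<beta> - 1) / real n"
  defines "f0 \<equiv> (\<lambda>z::complex. z * exp (of_real cc * Ln (1 - z ^ n)))"
  shows "f0 \<in> class_M n \<beta>"
    "\<And>x::real. 0 \<le> x \<Longrightarrow> x < 1 \<Longrightarrow> zdlog f0 (of_real x) = of_real (1 - 2 * (\<beta> - 1) * x ^ n / (1 - x ^ n))"
proof -
  have npos: "n > 0" using n by simp
  have pw: "norm (z ^ n) < 1" if "z \<in> ball 0 1" for z :: complex
    using that npos by (simp add: norm_power power_less_one_iff)
  have notneg: "1 - z ^ n \<notin> \<real>\<^sub>\<le>\<^sub>0" if "z \<in> ball 0 1" for z :: complex
    by (rule Re_pos_not_nonpos, rule one_minus_in_disk, rule pw[OF that])
  have nz1: "1 - z ^ n \<noteq> 0" if "z \<in> ball 0 1" for z :: complex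
    using notneg[OF that] by auto
  have holf0: "f0 holomorphic_on ball 0 1"
    unfolding f0_def using notneg by (intro holomorphic_intros) auto
  have zd: "zdlog f0 z = 1 - of_real (2 * (\<beta> - 1)) * z ^ n / (1 - z ^ n)" if z: "z \<in> ball 0 1" for z
  proof (cases "z = 0")
    case True then show ?thesis using npos by (simp add: zdlog_def power_0_left)
  next
    case False
    define X where "X = exp (of_real cc * Ln (1 - z ^ n))"
    have d1: "((\<lambda>w. 1 - w ^ n) has_field_derivative - (of_nat n * z ^ (n - 1))) (at z)"
      by (auto intro!: derivative_eq_intros)
    have d2: "(Ln has_field_derivative inverse (1 - z ^ n)) (at (1 - z ^ n))"
      by (rule has_field_derivative_Ln[OF notneg[OF z]])
    have d3: "((\<lambda>w. Ln (1 - w ^ n)) has_field_derivative inverse (1 - z ^ n) * - (of_nat n * z ^ (n - 1))) (at z)"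
      using DERIV_chain2[OF d2 d1] .
    have d4: "((\<lambda>w. of_real cc * Ln (1 - w ^ n)) has_field_derivative of_real cc * (inverse (1 - z ^ n) * - (of_nat n * z ^ (n - 1)))) (at z)"
      using DERIV_cmult[OF d3] .
    have d5: "((\<lambda>w. exp (of_real cc * Ln (1 - w ^ n))) has_field_derivative X * (of_real cc * (inverse (1 - z ^ n) * - (of_nat n * z ^ (n - 1))))) (at z)"
      using DERIV_chain2[OF DERIV_exp d4] unfolding X_def .
    have d6: "(f0 has_field_derivative 1 * X + X * (of_real cc * (inverse (1 - z ^ n) * - (of_nat n * z ^ (n - 1)))) * z) (at z)"
      unfolding f0_def using DERIV_mult[OF DERIV_ident d5] unfolding X_def .
    then have df: "deriv f0 z = 1 * X + X * (of_real cc * (inverse (1 - z ^ n) * - (of_nat n * z ^ (n - 1)))) * z"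
      by (rule DERIV_imp_deriv)
    have zz: "z ^ (n - 1) * z = z ^ n" using npos by (cases n) (auto simp: mult.commute)
    have Xnz: "X \<noteq> 0" by (simp add: X_def)
    have ccn: "of_real cc * of_nat n = (of_real (2 * (\<beta> - 1)) :: complex)"
      using npos unfolding cc_def by (simp add: field_simps)
    have "zdlog f0 z = z * deriv f0 z / (z * X)"
      using False by (simp add: zdlog_def f0_def X_def)
    also have "\<dots> = deriv f0 z / X" using False by simp
    also have "\<dots> = 1 + of_real cc * (inverse (1 - z ^ n) * - (of_nat n * z ^ (n - 1))) * z"
      using Xnz unfolding df by (simp add: field_simps)
    also have "\<dots> = 1 - (of_real cc * of_nat n) * (z ^ (n - 1) * z) / (1 - z ^ n)"
      by (simp add: field_simps)
    also have "\<dots> = 1 - of_real (2 * (\<beta> - 1)) * z ^ n / (1 - z ^ n)"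
      by (simp only: ccn zz)
    finally show ?thesis .
  qed
  define Q where "Q w = exp (of_real cc * Ln (1 - w))" for w :: complex
  have notneg1: "1 - w \<notin> \<real>\<^sub>\<le>\<^sub>0" if "w \<in> ball 0 1" for w :: complex
    by (rule Re_pos_not_nonpos, rule one_minus_in_disk) (use that in simp)
  have holQ: "Q holomorphic_on ball 0 1"
    unfolding Q_def using notneg1 by (intro holomorphic_intros) auto
  have Q0: "Q 0 = 1" by (simp add: Q_def)
  define Q1 where "Q1 w = (if w = 0 then deriv Q 0 else (Q w - Q 0) / (w - 0))" for w
  have holQ1: "Q1 holomorphic_on ball 0 1"
    unfolding Q1_def by (rule pole_lemma_open[OF holQ]) simp
  have Qeq: "Q w = 1 + w * Q1 w" for w
    by (cases "w = 0") (auto simp: Q1_def Q0)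
  define H where "H z = Q1 (z ^ n)" for z :: complex
  have holH: "H holomorphic_on ball 0 1"
  proof -
    have "(Q1 \<circ> (\<lambda>z. z ^ n)) holomorphic_on ball 0 1"
    proof (rule holomorphic_on_compose_gen[OF _ holQ1])
      show "(\<lambda>z::complex. z ^ n) holomorphic_on ball 0 1" by (intro holomorphic_intros)
      show "(\<lambda>z::complex. z ^ n) ` ball 0 1 \<subseteq> ball 0 1" using pw by auto
    qed
    then show ?thesis by (simp add: o_def H_def[abs_def])
  qed
  have feq: "f0 z - z = z ^ (n + 1) * H z" for z
  proof -
    have "f0 z = z * Q (z ^ n)" by (simp add: f0_def Q_def)
    then show ?thesis by (simp add: Qeq H_def algebra_simps)
  qed
  have hd: "(deriv ^^ k) f0 0 = (deriv ^^ k) (\<lambda>z. z) 0" if "k < n + 1" for k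
  proof -
    have "(deriv ^^ k) (\<lambda>z. f0 z - z) 0 = 0"
      by (rule factor_zero_converse[OF _ holH _ that]) (auto intro!: holomorphic_intros holf0 holH simp: feq)
    moreover have "(deriv ^^ k) (\<lambda>z. f0 z - z) 0 = (deriv ^^ k) f0 0 - (deriv ^^ k) (\<lambda>z. z) 0"
      by (rule higher_deriv_diff) (auto intro!: holomorphic_intros holf0)
    ultimately show ?thesis by simp
  qed
  have fA: "f0 \<in> class_A n"
    unfolding class_A_def
  proof (intro CollectI conjI allI impI)
    show "f0 holomorphic_on ball 0 1" by (rule holf0)
    show "f0 0 = 0" by (simp add: f0_def)
    show "deriv f0 0 = 1" using hd[of 1] n by simp
    fix k assume "2 \<le> k \<and> k \<le> n"
    then show "(deriv ^^ k) f0 0 = 0" using hd[of k] by simp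
  qed
  have fnz: "\<forall>z\<in>ball 0 1 - {0}. f0 z \<noteq> 0" by (simp add: f0_def)
  have reb: "Re (zdlog f0 z) < \<beta>" if z: "z \<in> ball 0 1" for z
  proof -
    define w where "w = z ^ n"
    have w1: "norm w < 1" using pw[OF z] by (simp add: w_def)
    have hre: "Re (w / (1 - w)) > - 1 / 2" by (rule re_lemma[OF w1])
    have "zdlog f0 z = 1 - of_real (2 * (\<beta> - 1)) * (w / (1 - w))"
      using zd[OF z] by (simp add: w_def)
    then have "Re (zdlog f0 z) = 1 - 2 * (\<beta> - 1) * Re (w / (1 - w))" by (simp only: Re_aux)
    also have "\<dots> < 1 - 2 * (\<beta> - 1) * (- 1 / 2)"
      using hre b by (intro diff_strict_left_mono mult_strict_left_mono) auto
    also have "\<dots> = \<beta>" by (simp add: field_simps)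
    finally show ?thesis .
  qed
  show "f0 \<in> class_M n \<beta>"
    unfolding class_M_def using fA fnz reb by auto
  fix x :: real assume x: "0 \<le> x" "x < 1"
  have xb: "complex_of_real x \<in> ball 0 1" using x by simp
  show "zdlog f0 (of_real x) = of_real (1 - 2 * (\<beta> - 1) * x ^ n / (1 - x ^ n))"
    by (simp add: zd[OF xb])
qed



theorem mainTheorem10:
  fixes n :: nat and \<beta> :: real
  assumes "n \<ge> 1" and "\<beta> > 1"
  shows "is_sharp_radius (S_wp n) (class_M n \<beta>)
           ((2 * exp 1 * (\<beta> - 1) + 1) powr (- 1 / real n))"
proof -
  note n = assms(1) and b = assms(2)
  have npos: "n > 0" using n by simp
  define B where "B = 2 * exp 1 * (\<beta> - 1) + 1"
  define R where "R = B powr (- 1 / real n)"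
  define \<rho> where "\<rho> = 1 / B"
  have Bg: "B > 1" using b by (simp add: B_def)
  have Rpos: "R > 0" using Bg by (simp add: R_def)
  have Rn: "R ^ n = \<rho>"
  proof -
    have "R ^ n = R powr real n" using Rpos by (simp add: powr_realpow)
    also have "\<dots> = B powr (- 1 / real n * real n)" by (simp add: R_def powr_powr)
    also have "- 1 / real n * real n = - 1" using npos by simp
    also have "B powr (- 1) = inverse (B powr 1)" by (rule powr_minus)
    also have "B powr 1 = B" using Bg by simp
    finally show ?thesis by (simp add: \<rho>_def divide_inverse)
  qed
  have rho: "0 < \<rho>" "\<rho> < 1" using Bg by (auto simp: \<rho>_def)
  have R1: "R \<le> 1"
  proof (rule ccontr)
    assume "\<not> R \<le> 1"
    then have "1 < R ^ n" using npos by (intro one_less_power) auto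
    then show False using Rn rho by simp
  qed
  have rhoB: "\<rho> = 1 / (2 * exp 1 * (\<beta> - 1) + 1)" by (simp add: \<rho>_def B_def)
  obtain \<phi> where holphi: "\<phi> holomorphic_on ball 0 (1 / exp 1)"
    and phi: "\<And>w. w \<in> ball 0 (1 / exp 1) \<Longrightarrow> norm (\<phi> w) < 1 \<and> \<phi> w * exp (\<phi> w) = w"
    and phi0: "\<phi> 0 = 0"
    using lambert_inverse by blast
  have adm: "R \<in> admissible_radii (S_wp n) (class_M n \<beta>)"
    unfolding admissible_radii_def
  proof (intro CollectI conjI allI impI ballI)
    show "0 < R" by (rule Rpos)
    show "R \<le> 1" by (rule R1)
    fix r :: real and f assume r: "0 < r \<and> r \<le> R" and fM: "f \<in> class_M n \<beta>"
    have fA: "f \<in> class_A n" and nz: "\<forall>z\<in>ball 0 1 - {0}. f z \<noteq> 0"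
      using fM by (auto simp: class_M_def)
    have r1: "0 < r" "r \<le> 1" using r R1 by auto
    define g where "g = (\<lambda>z. f (of_real r * z) / of_real r)"
    have gA: "g \<in> class_A n" and gnz: "\<forall>z\<in>ball 0 1 - {0}. g z \<noteq> 0"
      and gz: "\<And>z. z \<in> ball 0 1 \<Longrightarrow> zdlog g z = zdlog f (of_real r * z)"
      using scale_lemma[OF fA nz r1] unfolding g_def by blast+
    have inb: "of_real r * z \<in> ball 0 1" and small: "norm (of_real r * z) ^ n < \<rho>"
      if z: "z \<in> ball 0 1" for z :: complex
    proof -
      have "norm (of_real r * z) = r * norm z" using r1 by (simp add: norm_mult)
      also have "\<dots> < r" using z r1 by simp
      finally have lt: "norm (of_real r * z) < r" .
      then show "of_real r * z \<in> ball 0 1" using r1 by simp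
      have "norm (of_real r * z) < R" using lt r by simp
      then have "norm (of_real r * z) ^ n < R ^ n" using npos by (intro power_strict_mono) auto
      then show "norm (of_real r * z) ^ n < \<rho>" using Rn by simp
    qed
    define \<omega> where "\<omega> z = \<phi> (zdlog f (of_real r * z) - 1)" for z
    have inphi: "zdlog f (of_real r * z) - 1 \<in> ball 0 (1 / exp 1)" if z: "z \<in> ball 0 1" for z
      using M_bound[OF fM n b inb[OF z]] small[OF z] rhoB by (simp add: dist_norm norm_minus_commute)
    have holzd: "zdlog f holomorphic_on ball 0 1" by (rule zdlog_holo[OF fA n nz])
    have holinner: "(\<lambda>z. zdlog f (of_real r * z) - 1) holomorphic_on ball 0 1"
    proof -
      have "(zdlog f \<circ> (\<lambda>z. of_real r * z)) holomorphic_on ball 0 1"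
      proof (rule holomorphic_on_compose_gen[OF _ holzd])
        show "(\<lambda>z::complex. of_real r * z) holomorphic_on ball 0 1" by (intro holomorphic_intros)
        show "(\<lambda>z::complex. of_real r * z) ` ball 0 1 \<subseteq> ball 0 1" using inb by blast
      qed
      then show ?thesis by (intro holomorphic_intros) (simp add: o_def)
    qed
    have holom: "\<omega> holomorphic_on ball 0 1"
    proof -
      have "(\<phi> \<circ> (\<lambda>z. zdlog f (of_real r * z) - 1)) holomorphic_on ball 0 1"
        by (rule holomorphic_on_compose_gen[OF holinner holphi]) (use inphi in blast)
      then show ?thesis by (simp add: o_def \<omega>_def[abs_def])
    qed
    have "subordinate (zdlog g) wp"
      unfolding subordinate_def
    proof (intro exI[of _ \<omega>] conjI ballI)
      show "\<omega> holomorphic_on ball 0 1" by (rule holom)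
      show "\<omega> ` ball 0 1 \<subseteq> ball 0 1" using phi inphi by (auto simp: \<omega>_def)
      show "\<omega> 0 = 0" by (simp add: \<omega>_def zdlog_def phi0)
      fix z :: complex assume z: "z \<in> ball 0 1"
      have "\<phi> (zdlog f (of_real r * z) - 1) * exp (\<phi> (zdlog f (of_real r * z) - 1)) = zdlog f (of_real r * z) - 1"
        using phi[OF inphi[OF z]] by blast
      then show "zdlog g z = wp (\<omega> z)"
        by (simp add: gz[OF z] wp_def \<omega>_def)
    qed
    then show "g \<in> S_wp n" using gA gnz by (simp add: S_wp_def)
  qed
  have sharp: "r0 \<le> R" if r0: "r0 \<in> admissible_radii (S_wp n) (class_M n \<beta>)" for r0
  proof (rule ccontr)
    assume "\<not> r0 \<le> R"
    then have Rr: "R < r0" by simp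
    have r0b: "0 < r0" "r0 \<le> 1"
      and all: "\<And>f. f \<in> class_M n \<beta> \<Longrightarrow> (\<lambda>z. f (of_real r0 * z) / of_real r0) \<in> S_wp n"
      using r0 unfolding admissible_radii_def by auto
    define cc where "cc = 2 * (\<beta> - 1) / real n"
    define f0 where "f0 = (\<lambda>z::complex. z * exp (of_real cc * Ln (1 - z ^ n)))"
    have f0M: "f0 \<in> class_M n \<beta>"
      and f0x: "\<And>x::real. 0 \<le> x \<Longrightarrow> x < 1 \<Longrightarrow> zdlog f0 (of_real x) = of_real (1 - 2 * (\<beta> - 1) * x ^ n / (1 - x ^ n))"
      using extremal[OF n b] unfolding cc_def f0_def by blast+
    have f0A: "f0 \<in> class_A n" and f0nz: "\<forall>z\<in>ball 0 1 - {0}. f0 z \<noteq> 0"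
      using f0M by (auto simp: class_M_def)
    define g where "g = (\<lambda>z. f0 (of_real r0 * z) / of_real r0)"
    have gS: "g \<in> S_wp n" using all[OF f0M] by (simp add: g_def)
    have gz: "\<And>z. z \<in> ball 0 1 \<Longrightarrow> zdlog g z = zdlog f0 (of_real r0 * z)"
      using scale_lemma[OF f0A f0nz r0b] unfolding g_def by blast
    obtain \<omega> where om: "\<omega> ` ball 0 1 \<subseteq> ball 0 1" and omeq: "\<forall>z\<in>ball 0 1. zdlog g z = wp (\<omega> z)"
      using gS by (auto simp: S_wp_def subordinate_def)
    have rr: "\<rho> < r0 ^ n"
    proof -
      have "R ^ n < r0 ^ n" using Rr Rpos npos by (intro power_strict_mono) auto
      then show ?thesis using Rn by simp
    qed
    define x where "x = root n ((\<rho> + r0 ^ n) / 2)"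
    have xpos0: "(\<rho> + r0 ^ n) / 2 > 0" using rho r0b by (simp add: add_pos_pos)
    have xn: "x ^ n = (\<rho> + r0 ^ n) / 2" unfolding x_def using npos xpos0 by simp
    have xpos: "x > 0" unfolding x_def using npos xpos0 by simp
    have xr0: "x < r0"
    proof (rule power_less_imp_less_base[of _ n])
      have "(\<rho> + r0 ^ n) / 2 < r0 ^ n" using rr by (simp add: field_simps)
      then show "x ^ n < r0 ^ n" using xn by simp
      show "0 \<le> r0" using r0b by simp
    qed
    have xrho: "\<rho> < x ^ n"
    proof -
      have "\<rho> < (\<rho> + r0 ^ n) / 2" using rr by (simp add: field_simps)
      then show ?thesis using xn by simp
    qed
    define t where "t = x / r0"
    have t: "0 < t" "t < 1" using xpos xr0 r0b by (auto simp: t_def field_simps)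
    have tb: "complex_of_real t \<in> ball 0 1" using t by simp
    have x1: "x < 1" using xr0 r0b by simp
    have "zdlog g (of_real t) = zdlog f0 (of_real x)"
      using gz[OF tb] r0b by (simp add: t_def)
    also have "\<dots> = of_real (1 - 2 * (\<beta> - 1) * x ^ n / (1 - x ^ n))"
      using f0x[of x] xpos x1 by simp
    finally have zv: "zdlog g (of_real t) = of_real (1 - 2 * (\<beta> - 1) * x ^ n / (1 - x ^ n))" .
    define u where "u = \<omega> (of_real t)"
    have "u \<in> ball 0 1" using om tb unfolding u_def by blast
    then have u1: "norm u < 1" by simp
    define v where "v = - (2 * (\<beta> - 1) * x ^ n / (1 - x ^ n))"
    define Y where "Y = 1 - 2 * (\<beta> - 1) * x ^ n / (1 - x ^ n)"
    have h: "1 + u * exp u = complex_of_real Y"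
      using omeq tb zv by (simp add: u_def wp_def Y_def)
    have "u * exp u = (1 + u * exp u) - 1" by simp
    also have "\<dots> = complex_of_real Y - complex_of_real 1" by (simp only: h of_real_1)
    also have "\<dots> = complex_of_real (Y - 1)" by (simp only: of_real_diff)
    also have "Y - 1 = v" by (simp add: Y_def v_def)
    finally have ue: "u * exp u = of_real v" .
    have "Im u = 0" using im_zero_lemma[OF u1] ue by simp
    then have ur: "u = complex_of_real (Re u)" by (simp add: complex_eq_iff)
    have "complex_of_real (Re u * exp (Re u)) = of_real v"
      using ue ur by (metis exp_of_real of_real_mult)
    then have av: "Re u * exp (Re u) = v" by (simp only: of_real_eq_iff)
    have xn1: "1 - x ^ n > 0" using x1 xpos npos by (simp add: power_less_one_iff)
    have "v < - (1 / exp 1)"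
    proof -
      have "\<rho> * B = 1" using Bg by (simp add: \<rho>_def)
      then have "1 < x ^ n * B" using xrho Bg by (metis mult_strict_right_mono less_trans zero_less_one)
      then have "1 - x ^ n < 2 * exp 1 * (\<beta> - 1) * x ^ n" by (simp add: B_def algebra_simps)
      then have "(1 - x ^ n) / exp 1 < 2 * (\<beta> - 1) * x ^ n" by (simp add: field_simps)
      then have "1 / exp 1 < 2 * (\<beta> - 1) * x ^ n / (1 - x ^ n)" using xn1 by (simp add: field_simps)
      then show ?thesis by (simp add: v_def)
    qed
    then show False using av aexp_lower[of "Re u"] by simp
  qed
  show ?thesis
    unfolding is_sharp_radius_def using adm sharp by (simp add: R_def B_def)
qed


end
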